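(* For every integer $d\ge 1$, a countable graph $G$ is a $d$-sphere graph if and only if $G\in\mathcal{S}^d$.
   Context: Let $\mathbb{D}^d=\{x\in\mathbb{R}^{d+1}: |x|\le 1\}$ and let $\mathcal{H}_d=\{\mathbb{D}^d\cap H: H \text{ a hyperplane of } \mathbb{R}^{d+1} \text{ meeting the interior of } \mathbb{D}^d\}$. A $d$-sphere graph is a graph that is the intersection graph of a subfamily of $\mathcal{H}_d$ (vertices identified with members of the family, adjacent iff the sets intersect). For $d\ge 2$, $\mathcal{S}^d$ is the class of graphs that are intersection graphs of families of spheres in $\mathbb{R}^d$ (a sphere being the boundary of a closed ball of positive radius); $\mathcal{S}^1$ is the class of circle graphs, i.e. intersection graphs of families of chords of the circle $\mathbb{S}^1$. *)

theory Defs
  imports "HOL-Analysis.Analysis"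
begin

text \<open>Euclidean space R^n, represented as real sequences vanishing from index n on.\<close>
definition euc :: "nat \<Rightarrow> (nat \<Rightarrow> real) set" where
  "euc n = {x. \<forall>i\<ge>n. x i = 0}"

definition enorm :: "nat \<Rightarrow> (nat \<Rightarrow> real) \<Rightarrow> real" where
  "enorm n x = sqrt (\<Sum>i<n. (x i)\<^sup>2)"

definition disc :: "nat \<Rightarrow> (nat \<Rightarrow> real) set" where
  "disc d = {x \<in> euc (Suc d). enorm (Suc d) x \<le> 1}"

definition disc_interior :: "nat \<Rightarrow> (nat \<Rightarrow> real) set" where
  "disc_interior d = {x \<in> euc (Suc d). enorm (Suc d) x < 1}"

definition is_hyperplane :: "nat \<Rightarrow> (nat \<Rightarrow> real) set \<Rightarrow> bool" where
  "is_hyperplane n H \<longleftrightarrow>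
     (\<exists>a b. (\<exists>i<n. a i \<noteq> 0) \<and> H = {x \<in> euc n. (\<Sum>i<n. a i * x i) = b})"

definition hyp_sections :: "nat \<Rightarrow> (nat \<Rightarrow> real) set set" where
  "hyp_sections d = {disc d \<inter> H | H. is_hyperplane (Suc d) H \<and> H \<inter> disc_interior d \<noteq> {}}"

definition spheres :: "nat \<Rightarrow> (nat \<Rightarrow> real) set set" where
  "spheres n = {{x \<in> euc n. enorm n (\<lambda>i. x i - c i) = r} | c r. c \<in> euc n \<and> r > 0}"

definition chords :: "complex set set" where
  "chords = {closed_segment p q | p q. norm p = 1 \<and> norm q = 1 \<and> p \<noteq> q}"

definition graph :: "'v set \<Rightarrow> ('v \<Rightarrow> 'v \<Rightarrow> bool) \<Rightarrow> bool" where
  "graph V E \<longleftrightarrow> (\<forall>u v. E u v \<longrightarrow> E v u) \<and> (\<forall>v. \<not> E v v)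
                  \<and> (\<forall>u v. E u v \<longrightarrow> u \<in> V \<and> v \<in> V)"

text \<open>(V,E) is (isomorphic to) the intersection graph of a subfamily of F:
  vertices are identified (injectively) with members of F, adjacent iff they meet.\<close>
definition is_intersection_graph_of :: "'a set set \<Rightarrow> 'v set \<Rightarrow> ('v \<Rightarrow> 'v \<Rightarrow> bool) \<Rightarrow> bool" where
  "is_intersection_graph_of F V E \<longleftrightarrow>
     (\<exists>f. inj_on f V \<and> f ` V \<subseteq> F \<and>
          (\<forall>u\<in>V. \<forall>v\<in>V. u \<noteq> v \<longrightarrow> (E u v \<longleftrightarrow> f u \<inter> f v \<noteq> {})))"

definition d_sphere_graph :: "nat \<Rightarrow> 'v set \<Rightarrow> ('v \<Rightarrow> 'v \<Rightarrow> bool) \<Rightarrow> bool" where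
  "d_sphere_graph d V E \<longleftrightarrow> is_intersection_graph_of (hyp_sections d) V E"

definition in_S :: "nat \<Rightarrow> 'v set \<Rightarrow> ('v \<Rightarrow> 'v \<Rightarrow> bool) \<Rightarrow> bool" where
  "in_S d V E \<longleftrightarrow> (if d = 1 then is_intersection_graph_of chords V E
                    else is_intersection_graph_of (spheres d) V E)"

end

theory Submission
  imports Defs "HOL-Computational_Algebra.Polynomial"
begin


definition dot :: "nat \<Rightarrow> (nat\<Rightarrow>real) \<Rightarrow> (nat\<Rightarrow>real) \<Rightarrow> real" where
  "dot n x y = (\<Sum>i<n. x i * y i)"

definition lin :: "(nat\<Rightarrow>real) \<Rightarrow> real \<Rightarrow> (nat\<Rightarrow>real) \<Rightarrow> (nat\<Rightarrow>real)" where
  "lin x t v = (\<lambda>i. x i + t * v i)"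

definition hp :: "nat \<Rightarrow> (nat\<Rightarrow>real) \<Rightarrow> real \<Rightarrow> (nat\<Rightarrow>real) set" where
  "hp n a b = {x \<in> euc n. dot n a x = b}"

definition sphr :: "nat \<Rightarrow> (nat\<Rightarrow>real) set" where
  "sphr n = {x \<in> euc n. dot n x x = 1}"

lemma dot_comm: "dot n x y = dot n y x"
  unfolding dot_def by (simp add: mult.commute)

lemma enorm_dot: "enorm n x = sqrt (dot n x x)"
  unfolding enorm_def dot_def by (simp add: power2_eq_square)

lemma dot_self_nonneg: "dot n x x \<ge> 0"
  unfolding dot_def by (intro sum_nonneg) auto

lemma dot_self_pos: "dot n v v > 0 \<longleftrightarrow> (\<exists>i<n. v i \<noteq> 0)"
proof
  assume "dot n v v > 0"
  then show "\<exists>i<n. v i \<noteq> 0" unfolding dot_def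
    by (metis (no_types, lifting) lessThan_iff mult_zero_left order_less_irrefl sum.neutral)
next
  assume "\<exists>i<n. v i \<noteq> 0"
  then obtain i where i: "i<n" "v i \<noteq> 0" by blast
  have "0 < v i * v i" using i(2) by (metis not_real_square_gt_zero)
  also have "\<dots> \<le> (\<Sum>j<n. v j * v j)"
    using i by (intro member_le_sum) auto
  finally show "dot n v v > 0" unfolding dot_def .
qed

lemma disc_eq: "disc d = {x \<in> euc (Suc d). dot (Suc d) x x \<le> 1}"
  unfolding disc_def enorm_dot by auto

lemma disc_interior_eq: "disc_interior d = {x \<in> euc (Suc d). dot (Suc d) x x < 1}"
  unfolding disc_interior_def enorm_dot by auto

lemma is_hyperplane_eq: "is_hyperplane n H \<longleftrightarrow> (\<exists>a b. (\<exists>i<n. a i \<noteq> 0) \<and> H = hp n a b)"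
  unfolding is_hyperplane_def hp_def dot_def by auto

lemma dot_lin_right: "dot n a (lin x t v) = dot n a x + t * dot n a v"
  unfolding dot_def lin_def by (simp add: algebra_simps sum.distrib sum_distrib_left)

lemma dot_lin_self: "dot n (lin x t v) (lin x t v) = dot n x x + 2 * t * dot n x v + t\<^sup>2 * dot n v v"
  unfolding dot_def lin_def
  by (simp add: algebra_simps sum.distrib sum_distrib_left power2_eq_square)

lemma lin_euc: "x \<in> euc n \<Longrightarrow> v \<in> euc n \<Longrightarrow> lin x t v \<in> euc n"
  unfolding euc_def lin_def by auto

lemma quad_roots:
  fixes A B C :: real
  assumes A: "A > 0" and C: "C < 0"
  shows "\<exists>t1 t2. t1 < t2 \<and> (\<forall>\<mu>. (A*\<mu>\<^sup>2 + 2*B*\<mu> + C \<le> 0 \<longleftrightarrow> t1 \<le> \<mu> \<and> \<mu> \<le> t2))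
             \<and> A*t1\<^sup>2 + 2*B*t1 + C = 0 \<and> A*t2\<^sup>2 + 2*B*t2 + C = 0"
proof -
  define D where "D = B\<^sup>2 - A*C"
  have Dpos: "D > 0" unfolding D_def using A C
    by (smt (verit) mult_pos_neg zero_le_power2)
  define s where "s = sqrt D"
  have s: "s > 0" "s\<^sup>2 = D" unfolding s_def using Dpos by auto
  define t1 where "t1 = (-B - s)/A"
  define t2 where "t2 = (-B + s)/A"
  have lt: "t1 < t2" unfolding t1_def t2_def using A s by (simp add: divide_strict_right_mono)
  have fac: "A*\<mu>\<^sup>2 + 2*B*\<mu> + C = A*((\<mu> - t1)*(\<mu> - t2))" for \<mu>
  proof -
    have "A*((\<mu> - t1)*(\<mu> - t2)) = A*\<mu>\<^sup>2 - A*(t1+t2)*\<mu> + A*t1*t2"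
      by (simp add: algebra_simps power2_eq_square)
    also have "A*(t1+t2) = -2*B" unfolding t1_def t2_def using A by (simp add: field_simps)
    also have "A*t1*t2 = (B\<^sup>2 - s\<^sup>2)/A" unfolding t1_def t2_def using A
      by (simp add: field_simps power2_eq_square)
    also have "(B\<^sup>2 - s\<^sup>2)/A = C" using s A unfolding D_def by (simp add: field_simps)
    finally show ?thesis by simp
  qed
  have "(A*\<mu>\<^sup>2 + 2*B*\<mu> + C \<le> 0 \<longleftrightarrow> t1 \<le> \<mu> \<and> \<mu> \<le> t2)" for \<mu>
  proof -
    have "A*\<mu>\<^sup>2 + 2*B*\<mu> + C \<le> 0 \<longleftrightarrow> (\<mu> - t1)*(\<mu> - t2) \<le> 0"
      unfolding fac using A by (simp add: mult_le_0_iff)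
    also have "\<dots> \<longleftrightarrow> t1 \<le> \<mu> \<and> \<mu> \<le> t2" using lt
      by (auto simp: mult_le_0_iff)
    finally show ?thesis .
  qed
  moreover have "A*t1\<^sup>2 + 2*B*t1 + C = 0" "A*t2\<^sup>2 + 2*B*t2 + C = 0" unfolding fac by auto
  ultimately show ?thesis using lt by blast
qed

lemma line_hit:
  assumes "dot n x x < 1" "dot n v v > 0"
  shows "\<exists>t1 t2. t1 < t2 \<and> (\<forall>\<mu>. dot n (lin x \<mu> v) (lin x \<mu> v) \<le> 1 \<longleftrightarrow> t1 \<le> \<mu> \<and> \<mu> \<le> t2)
           \<and> dot n (lin x t1 v) (lin x t1 v) = 1 \<and> dot n (lin x t2 v) (lin x t2 v) = 1"
proof -
  obtain t1 t2 where t: "t1 < t2"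
    "\<forall>\<mu>. (dot n v v * \<mu>\<^sup>2 + 2 * dot n x v * \<mu> + (dot n x x - 1) \<le> 0 \<longleftrightarrow> t1 \<le> \<mu> \<and> \<mu> \<le> t2)"
    "dot n v v * t1\<^sup>2 + 2 * dot n x v * t1 + (dot n x x - 1) = 0"
    "dot n v v * t2\<^sup>2 + 2 * dot n x v * t2 + (dot n x x - 1) = 0"
    using quad_roots[of "dot n v v" "dot n x x - 1" "dot n x v"] assms by auto
  show ?thesis
    apply (rule exI[of _ t1], rule exI[of _ t2])
    using t unfolding dot_lin_self by (auto simp: algebra_simps)
qed

lemma line_hit1:
  assumes "dot n x x \<le> 1" "dot n v v > 0"
  shows "\<exists>t. dot n (lin x t v) (lin x t v) = 1"
proof (cases "dot n x x = 1")
  case True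
  then show ?thesis by (intro exI[of _ 0]) (simp add: lin_def)
next
  case False
  then show ?thesis using line_hit[of n x v] assms by auto
qed



definition ev :: "nat \<Rightarrow> nat \<Rightarrow> real" where
  "ev j = (\<lambda>i. if i = j then 1 else 0)"

definition lc :: "real \<Rightarrow> (nat\<Rightarrow>real) \<Rightarrow> real \<Rightarrow> (nat\<Rightarrow>real) \<Rightarrow> (nat\<Rightarrow>real)" where
  "lc \<alpha> x \<beta> y = (\<lambda>i. \<alpha> * x i + \<beta> * y i)"

lemma dot_ev: "j < n \<Longrightarrow> dot n a (ev j) = a j"
  unfolding dot_def ev_def by (simp add: if_distrib cong: if_cong)

lemma dot_lc: "dot n a (lc \<alpha> x \<beta> y) = \<alpha> * dot n a x + \<beta> * dot n a y"
  unfolding dot_def lc_def by (simp add: algebra_simps sum.distrib sum_distrib_left)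

lemma lc_euc: "x \<in> euc n \<Longrightarrow> y \<in> euc n \<Longrightarrow> lc \<alpha> x \<beta> y \<in> euc n"
  unfolding euc_def lc_def by auto

lemma ev_euc: "j < n \<Longrightarrow> ev j \<in> euc n"
  unfolding euc_def ev_def by auto

lemma kernel1:
  assumes "n \<ge> 2" "i < n" "a i \<noteq> 0"
  shows "\<exists>v\<in>euc n. dot n v v > 0 \<and> dot n a v = 0"
proof -
  define j where "j = (if i = 0 then 1 else (0::nat))"
  have j: "j < n" "j \<noteq> i" using assms unfolding j_def by auto
  define v where "v = lc (a j) (ev i) (- a i) (ev j)"
  have "v \<in> euc n" unfolding v_def using j assms by (intro lc_euc ev_euc)
  moreover have "dot n a v = 0" unfolding v_def dot_lc using j assms by (simp add: dot_ev)
  moreover have "v j \<noteq> 0" unfolding v_def lc_def ev_def using j assms by simp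
  then have "dot n v v > 0" using j dot_self_pos by blast
  ultimately show ?thesis by blast
qed

lemma kernel2:
  assumes "n \<ge> 3"
  shows "\<exists>v\<in>euc n. dot n v v > 0 \<and> dot n a1 v = 0 \<and> dot n a2 v = 0"
proof (cases "\<exists>i<n. a1 i \<noteq> 0")
  case False
  have z: "dot n a1 v = 0" for v unfolding dot_def using False by simp
  show ?thesis
  proof (cases "\<exists>i<n. a2 i \<noteq> 0")
    case True
    then obtain i where "i<n" "a2 i \<noteq> 0" by blast
    then show ?thesis using kernel1[of n i a2] assms z by auto
  next
    case False2: False
    have z2: "dot n a2 v = 0" for v unfolding dot_def using False2 by simp
    have "ev 0 \<in> euc n" using assms by (intro ev_euc) auto
    moreover have "dot n (ev 0) (ev 0) > 0" using assms dot_self_pos[of n "ev 0"]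
      by (auto simp: ev_def intro!: exI[of _ 0])
    ultimately show ?thesis using z z2 by blast
  qed
next
  case True
  then obtain i where i: "i < n" "a1 i \<noteq> 0" by blast
  obtain j k where jk: "j < n" "k < n" "j \<noteq> i" "k \<noteq> i" "j \<noteq> k"
  proof (cases "i = 0")
    case True then show ?thesis using that[of 1 2] assms by auto
  next
    case F: False
    show ?thesis
    proof (cases "i = 1")
      case True then show ?thesis using that[of 0 2] assms by auto
    next
      case False then show ?thesis using that[of 0 1] assms F by auto
    qed
  qed
  define w1 where "w1 = lc (a1 j) (ev i) (- a1 i) (ev j)"
  define w2 where "w2 = lc (a1 k) (ev i) (- a1 i) (ev k)"
  have w1e: "w1 \<in> euc n" unfolding w1_def using jk i by (intro lc_euc ev_euc)
  have w2e: "w2 \<in> euc n" unfolding w2_def using jk i by (intro lc_euc ev_euc)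
  have d1: "dot n a1 w1 = 0" unfolding w1_def dot_lc using jk i by (simp add: dot_ev)
  have d2: "dot n a1 w2 = 0" unfolding w2_def dot_lc using jk i by (simp add: dot_ev)
  define \<alpha> where "\<alpha> = dot n a2 w1"
  define \<beta> where "\<beta> = dot n a2 w2"
  show ?thesis
  proof (cases "\<alpha> = 0")
    case True
    have "w1 j \<noteq> 0" unfolding w1_def lc_def ev_def using jk i by simp
    then have "dot n w1 w1 > 0" using jk dot_self_pos by blast
    then show ?thesis using w1e d1 True unfolding \<alpha>_def by blast
  next
    case False
    define v where "v = lc \<beta> w1 (-\<alpha>) w2"
    have "v \<in> euc n" unfolding v_def using w1e w2e by (rule lc_euc)
    moreover have "dot n a1 v = 0" unfolding v_def dot_lc d1 d2 by simp
    moreover have "dot n a2 v = 0" unfolding v_def dot_lc \<alpha>_def \<beta>_def by simp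
    moreover have "v k \<noteq> 0" unfolding v_def w1_def w2_def lc_def ev_def using jk i False by simp
    then have "dot n v v > 0" using jk dot_self_pos by blast
    ultimately show ?thesis by blast
  qed
qed

lemma sphr_sub_disc: "sphr (Suc d) \<subseteq> disc d"
  unfolding sphr_def disc_eq by auto

lemma lemmaA:
  assumes "n \<ge> 3" "x \<in> euc n" "dot n x x \<le> 1" "dot n a1 x = b1" "dot n a2 x = b2"
  shows "\<exists>y\<in>sphr n. dot n a1 y = b1 \<and> dot n a2 y = b2"
proof -
  obtain v where v: "v \<in> euc n" "dot n v v > 0" "dot n a1 v = 0" "dot n a2 v = 0"
    using kernel2[OF assms(1)] by blast
  obtain t where t: "dot n (lin x t v) (lin x t v) = 1" using line_hit1[OF assms(3) v(2)] by blast
  have "lin x t v \<in> sphr n" unfolding sphr_def using t lin_euc[OF assms(2) v(1)] by auto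
  moreover have "dot n a1 (lin x t v) = b1" "dot n a2 (lin x t v) = b2"
    unfolding dot_lin_right using v assms by auto
  ultimately show ?thesis by blast
qed

lemma lemmaB:
  assumes "n \<ge> 2" "x \<in> euc n" "dot n x x \<le> 1" "dot n a1 x = b1" "i < n" "a1 i \<noteq> 0"
    and H: "\<And>y. y \<in> sphr n \<Longrightarrow> dot n a1 y = b1 \<Longrightarrow> dot n a2 y = b2"
  shows "dot n a2 x = b2"
proof (cases "dot n x x = 1")
  case True
  then show ?thesis using H assms unfolding sphr_def by auto
next
  case False
  then have lt: "dot n x x < 1" using assms by auto
  obtain v where v: "v \<in> euc n" "dot n v v > 0" "dot n a1 v = 0"
    using kernel1[of n i a1] assms by blast
  obtain t1 t2 where t: "t1 < t2" "dot n (lin x t1 v) (lin x t1 v) = 1"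
    "dot n (lin x t2 v) (lin x t2 v) = 1"
    using line_hit[OF lt v(2)] by blast
  have s1: "lin x t1 v \<in> sphr n" unfolding sphr_def using t lin_euc[OF assms(2) v(1)] by auto
  have s2: "lin x t2 v \<in> sphr n" unfolding sphr_def using t lin_euc[OF assms(2) v(1)] by auto
  have e1: "dot n a2 x + t1 * dot n a2 v = b2"
    using H[OF s1] unfolding dot_lin_right using v assms by auto
  have e2: "dot n a2 x + t2 * dot n a2 v = b2"
    using H[OF s2] unfolding dot_lin_right using v assms by auto
  have "(t2 - t1) * dot n a2 v = t2 * dot n a2 v - t1 * dot n a2 v" by (simp add: left_diff_distrib)
  also have "\<dots> = 0" using e1 e2 by linarith
  finally have "(t2 - t1) * dot n a2 v = 0" .
  then have "dot n a2 v = 0" using t(1) by simp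
  then show ?thesis using e1 by simp
qed

lemma crit1:
  assumes "x \<in> euc n" "dot n x x < 1" "dot n a x = b" "\<exists>i<n. a i \<noteq> 0"
  shows "b\<^sup>2 < dot n a a"
proof -
  have pos: "dot n a a > 0" using assms(4) dot_self_pos by blast
  have "b\<^sup>2 \<le> dot n a a * dot n x x"
    using Cauchy_Schwarz_ineq_sum[of a x "{..<n}"] assms(3)
    unfolding dot_def by (simp add: power2_eq_square)
  also have "\<dots> < dot n a a" using pos assms(2) by simp
  finally show ?thesis .
qed

lemma crit2:
  assumes "b\<^sup>2 < dot n a a"
  shows "\<exists>x\<in>euc n. dot n x x < 1 \<and> dot n a x = b"
proof -
  obtain D where D: "D = dot n a a" by blast
  have pos: "D > 0" using assms D by (smt (verit) zero_le_power2)
  define c where "c = b / D"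
  define x where "x = (\<lambda>i. if i < n then c * a i else 0)"
  have xe: "x \<in> euc n" unfolding x_def euc_def by auto
  have "dot n a x = (\<Sum>i<n. c * (a i * a i))" unfolding x_def dot_def
    by (intro sum.cong) auto
  also have "\<dots> = c * D" unfolding D dot_def by (simp add: sum_distrib_left)
  finally have ax: "dot n a x = b" using pos unfolding c_def by simp
  have "dot n x x = (\<Sum>i<n. c\<^sup>2 * (a i * a i))" unfolding x_def dot_def
    by (intro sum.cong) (auto simp: power2_eq_square)
  also have "\<dots> = c\<^sup>2 * D" unfolding D dot_def by (simp add: sum_distrib_left)
  also have "\<dots> = b\<^sup>2 / D" using pos unfolding c_def by (simp add: power2_eq_square field_simps)
  also have "\<dots> < 1" using pos assms D by simp
  finally show ?thesis using xe ax by blast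
qed



lemma dot_Suc: "dot (Suc d) a x = dot d a x + a d * x d"
  unfolding dot_def by simp

lemma dot_cong: "(\<And>i. i < n \<Longrightarrow> x i = x' i) \<Longrightarrow> (\<And>i. i < n \<Longrightarrow> y i = y' i) \<Longrightarrow> dot n x y = dot n x' y'"
  unfolding dot_def by (intro sum.cong) auto

definition tau :: "nat \<Rightarrow> (nat\<Rightarrow>real) \<Rightarrow> (nat\<Rightarrow>real)" where
  "tau d y = (\<lambda>i. if i < d then 2 * y i / (dot d y y + 1)
                 else if i = d then (dot d y y - 1) / (dot d y y + 1) else 0)"

definition sig :: "nat \<Rightarrow> (nat\<Rightarrow>real) \<Rightarrow> (nat\<Rightarrow>real)" where
  "sig d x = (\<lambda>i. if i < d then x i / (1 - x d) else 0)"

lemma dot_scale_right: "dot n a (\<lambda>i. c * y i / e) = c * dot n a y / e"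
  unfolding dot_def by (simp add: sum_distrib_left sum_divide_distrib algebra_simps)

lemma dot_div_right: "dot n a (\<lambda>i. y i / e) = dot n a y / e"
  unfolding dot_def by (simp add: sum_divide_distrib)

lemma dot_d_tau: "dot d a (tau d y) = 2 * dot d a y / (dot d y y + 1)"
proof -
  have "dot d a (tau d y) = dot d a (\<lambda>i. 2 * y i / (dot d y y + 1))"
    by (rule dot_cong) (auto simp: tau_def)
  then show ?thesis by (simp add: dot_scale_right)
qed

lemma q_pos: "dot d y y + 1 > 0"
  using dot_self_nonneg[of d y] by linarith

lemma KI: "dot (Suc d) a (tau d y) = (2 * dot d a y + a d * (dot d y y - 1)) / (dot d y y + 1)"
  unfolding dot_Suc dot_d_tau by (simp add: tau_def add_divide_distrib)

lemma tau_euc: "tau d y \<in> euc (Suc d)"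
  unfolding tau_def euc_def by auto

lemma tau_self: "dot (Suc d) (tau d y) (tau d y) = 1"
proof -
  define q where "q = dot d y y"
  have qp: "q + 1 > 0" unfolding q_def by (rule q_pos)
  have "dot d (tau d y) (tau d y) = 2 * dot d (tau d y) y / (q + 1)"
    unfolding q_def by (rule dot_d_tau)
  also have "dot d (tau d y) y = 2 * q / (q+1)"
    unfolding q_def by (subst dot_comm) (rule dot_d_tau)
  finally have A: "dot d (tau d y) (tau d y) = 4 * q / (q+1)^2"
    by (simp add: power2_eq_square)
  have "dot (Suc d) (tau d y) (tau d y) = 4 * q / (q+1)^2 + ((q - 1)/(q+1))^2"
    unfolding dot_Suc A by (simp add: tau_def q_def power2_eq_square)
  also have "\<dots> = (4 * q + (q - 1)\<^sup>2) / (q+1)^2" by (simp add: power_divide add_divide_distrib)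
  also have "4 * q + (q - 1)\<^sup>2 = (q+1)^2" by (simp add: power2_eq_square algebra_simps)
  also have "(q+1)^2 / (q+1)^2 = (1::real)" using qp by simp
  finally show ?thesis .
qed

lemma tau_sph: "tau d y \<in> sphr (Suc d)"
  unfolding sphr_def using tau_euc tau_self by auto

lemma tau_d: "tau d y d \<noteq> 1"
  using q_pos[of d y] by (simp add: tau_def field_simps)

lemma sig_euc: "sig d x \<in> euc d"
  unfolding sig_def euc_def by auto

lemma sig_tau: "y \<in> euc d \<Longrightarrow> sig d (tau d y) = y"
proof
  fix i assume y: "y \<in> euc d"
  have qp: "dot d y y + 1 > 0" by (rule q_pos)
  show "sig d (tau d y) i = y i"
  proof (cases "i < d")
    case True
    then show ?thesis using qp by (simp add: sig_def tau_def field_simps)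
  next
    case False
    then show ?thesis using y by (simp add: sig_def euc_def)
  qed
qed

lemma tau_sig:
  assumes x: "x \<in> sphr (Suc d)" and xd: "x d \<noteq> 1"
  shows "tau d (sig d x) = x"
proof
  fix i
  define m where "m = 1 - x d"
  have m: "m \<noteq> 0" using xd unfolding m_def by simp
  have xx: "dot d x x = 1 - (x d)\<^sup>2" using x unfolding sphr_def dot_Suc by (simp add: power2_eq_square)
  have "dot d (sig d x) (sig d x) = dot d (sig d x) (\<lambda>i. x i / m)"
    by (rule dot_cong) (auto simp: sig_def m_def)
  also have "\<dots> = dot d x (sig d x) / m" by (simp add: dot_div_right dot_comm)
  also have "dot d x (sig d x) = dot d x (\<lambda>i. x i / m)"
    by (rule dot_cong) (auto simp: sig_def m_def)
  also have "\<dots> = dot d x x / m" by (rule dot_div_right)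
  finally have q: "dot d (sig d x) (sig d x) = (1 - (x d)\<^sup>2) / m / m" using xx by simp
  have fm: "1 - (x d)\<^sup>2 = (1 + x d) * m" unfolding m_def by (simp add: algebra_simps power2_eq_square)
  have q2: "dot d (sig d x) (sig d x) = (1 + x d) / m"
    unfolding q fm using m by simp
  have q3: "dot d (sig d x) (sig d x) + 1 = 2 / m"
    unfolding q2 using m by (simp add: m_def field_simps)
  show "tau d (sig d x) i = x i"
  proof (cases "i < d")
    case True
    then show ?thesis unfolding tau_def q3 using m by (simp add: sig_def m_def[symmetric] field_simps)
  next
    case False
    show ?thesis
    proof (cases "i = d")
      case True
      then show ?thesis unfolding tau_def q3 q2 using m by (simp add: m_def field_simps)
    next
      case F: False
      then show ?thesis using False x by (simp add: tau_def sphr_def euc_def)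
    qed
  qed
qed

lemma core:
  assumes k: "a d - b \<noteq> 0"
  shows "dot (Suc d) a (tau d y) = b \<longleftrightarrow>
    dot d (\<lambda>i. y i + a i / (a d - b)) (\<lambda>i. y i + a i / (a d - b)) = (dot (Suc d) a a - b\<^sup>2) / (a d - b)\<^sup>2"
proof -
  obtain k where kdef: "k = a d - b" by blast
  obtain q where qdef: "q = dot d y y" by blast
  obtain A where Adef: "A = dot d a y" by blast
  obtain Aa where Aadef: "Aa = dot d a a" by blast
  have qp: "q + 1 > 0" unfolding qdef by (rule q_pos)
  have kk: "k \<noteq> 0" using k unfolding kdef .
  have "dot d (\<lambda>i. y i + a i / k) (\<lambda>i. y i + a i / k) =
        (\<Sum>i<d. y i * y i + 2 * (a i * y i) / k + (a i * a i) / k\<^sup>2)"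
    unfolding dot_def by (intro sum.cong refl) (use kk in \<open>simp add: field_simps power2_eq_square\<close>)
  also have "\<dots> = q + 2 * A / k + Aa / k\<^sup>2"
    unfolding qdef Adef Aadef dot_def
    by (simp add: sum.distrib sum_divide_distrib sum_distrib_left)
  finally have E: "dot d (\<lambda>i. y i + a i / k) (\<lambda>i. y i + a i / k) = q + 2 * A / k + Aa / k\<^sup>2" .
  have "dot (Suc d) a (tau d y) = (2 * A + a d * (q - 1)) / (q + 1)"
    unfolding KI Adef qdef ..
  then have L: "dot (Suc d) a (tau d y) = b \<longleftrightarrow> 2 * A + a d * (q - 1) = b * (q + 1)"
    using qp by (simp add: divide_eq_eq)
  have R: "dot (Suc d) a a - b\<^sup>2 = Aa + (a d)\<^sup>2 - b\<^sup>2"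
    unfolding dot_Suc Aadef by (simp add: power2_eq_square)
  have k2: "k\<^sup>2 \<noteq> 0" using kk by simp
  have m1: "k\<^sup>2 * (q + 2 * A / k + Aa / k\<^sup>2) = k\<^sup>2 * q + 2 * A * k + Aa"
    using kk by (simp add: algebra_simps power2_eq_square)
  have "(q + 2 * A / k + Aa / k\<^sup>2 = (Aa + (a d)\<^sup>2 - b\<^sup>2) / k\<^sup>2) \<longleftrightarrow>
        (k\<^sup>2 * (q + 2 * A / k + Aa / k\<^sup>2) = Aa + (a d)\<^sup>2 - b\<^sup>2)"
    using k2 by (simp add: eq_divide_eq mult.commute)
  also have "\<dots> \<longleftrightarrow> k * (k * q + 2 * A - (a d + b)) = 0"
  proof -
    have "(a d)\<^sup>2 - b\<^sup>2 = k * (a d + b)" unfolding kdef by (simp add: algebra_simps power2_eq_square)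
    moreover have "k * (k * q + 2 * A - (a d + b)) = k\<^sup>2 * q + 2 * A * k - k * (a d + b)"
      by (simp add: algebra_simps power2_eq_square)
    ultimately show ?thesis unfolding m1 by linarith
  qed
  also have "\<dots> \<longleftrightarrow> k * q + 2 * A - (a d + b) = 0" using kk by simp
  also have "\<dots> \<longleftrightarrow> 2 * A + a d * (q - 1) = b * (q + 1)"
    unfolding kdef by (simp add: algebra_simps)
  finally show ?thesis unfolding L E[unfolded kdef] R kdef by simp
qed

lemma SphL:
  assumes k: "a d \<noteq> b" and ab: "b\<^sup>2 < dot (Suc d) a a"
  shows "{y \<in> euc d. dot (Suc d) a (tau d y) = b} \<in> spheres d"
proof -
  define k where "k = a d - b"
  have kk: "k \<noteq> 0" using k unfolding k_def by simp
  define c where "c = (\<lambda>i. if i < d then - a i / k else 0)"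
  define r where "r = sqrt ((dot (Suc d) a a - b\<^sup>2) / k\<^sup>2)"
  have rpos: "r > 0" unfolding r_def using ab kk by simp
  have "c \<in> euc d" unfolding c_def euc_def by auto
  moreover have "{y \<in> euc d. dot (Suc d) a (tau d y) = b} = {x \<in> euc d. enorm d (\<lambda>i. x i - c i) = r}"
  proof (intro Collect_cong conj_cong refl)
    fix y assume "y \<in> euc d"
    have "dot d (\<lambda>i. y i - c i) (\<lambda>i. y i - c i) = dot d (\<lambda>i. y i + a i / k) (\<lambda>i. y i + a i / k)"
      by (rule dot_cong) (auto simp: c_def)
    then have "enorm d (\<lambda>i. y i - c i) = r \<longleftrightarrow>
        dot d (\<lambda>i. y i + a i / k) (\<lambda>i. y i + a i / k) = (dot (Suc d) a a - b\<^sup>2) / k\<^sup>2"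
      unfolding enorm_dot r_def real_sqrt_eq_iff by simp
    then show "dot (Suc d) a (tau d y) = b \<longleftrightarrow> enorm d (\<lambda>i. y i - c i) = r"
      using core[of a d b y] kk unfolding k_def by simp
  qed
  ultimately show ?thesis unfolding spheres_def using rpos by blast
qed

lemma HypL:
  assumes c: "c \<in> euc d" and r: "r > 0"
  defines "a \<equiv> (\<lambda>i. if i < d then - c i else if i = d then (1 + r\<^sup>2 - dot d c c) / 2 else 0)"
  defines "b \<equiv> (r\<^sup>2 - dot d c c - 1) / 2"
  shows "a d - b = 1" "b\<^sup>2 < dot (Suc d) a a" "\<exists>i<Suc d. a i \<noteq> 0"
    "\<And>y. y \<in> euc d \<Longrightarrow> dot (Suc d) a (tau d y) = b \<longleftrightarrow> enorm d (\<lambda>i. y i - c i) = r"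
proof -
  show k: "a d - b = 1" unfolding a_def b_def by (simp add: field_simps)
  have "dot d a a = dot d (\<lambda>i. - c i) (\<lambda>i. - c i)" by (rule dot_cong) (auto simp: a_def)
  then have aa: "dot d a a = dot d c c" by (simp add: dot_def)
  have ad: "a d + b = r\<^sup>2 - dot d c c" unfolding a_def b_def by (simp add: field_simps)
  have sq: "(a d)\<^sup>2 - b\<^sup>2 = (a d - b) * (a d + b)" by (simp add: algebra_simps power2_eq_square)
  have D: "dot (Suc d) a a - b\<^sup>2 = r\<^sup>2"
  proof -
    have "dot (Suc d) a a - b\<^sup>2 = dot d c c + ((a d)\<^sup>2 - b\<^sup>2)"
      unfolding dot_Suc aa by (simp add: power2_eq_square)
    also have "\<dots> = r\<^sup>2" unfolding sq k ad by simp
    finally show ?thesis .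
  qed
  moreover have "r\<^sup>2 > 0" using r by simp
  ultimately show ab: "b\<^sup>2 < dot (Suc d) a a" by linarith
  have "dot (Suc d) a a > 0" using ab by (meson le_less_trans zero_le_power2)
  then show "\<exists>i<Suc d. a i \<noteq> 0" using dot_self_pos by blast
  fix y assume y: "y \<in> euc d"
  have "dot d (\<lambda>i. y i - c i) (\<lambda>i. y i - c i) = dot d (\<lambda>i. y i + a i / (a d - b)) (\<lambda>i. y i + a i / (a d - b))"
  proof (rule dot_cong)
    fix i assume "i < d"
    then have "a i = - c i" unfolding a_def by simp
    then show "y i - c i = y i + a i / (a d - b)" unfolding k by simp
  next
    fix i assume "i < d"
    then have "a i = - c i" unfolding a_def by simp
    then show "y i - c i = y i + a i / (a d - b)" unfolding k by simp
  qed
  moreover have rr: "r = sqrt (r\<^sup>2)" using r by simp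
  ultimately have "enorm d (\<lambda>i. y i - c i) = r \<longleftrightarrow>
      dot d (\<lambda>i. y i + a i / (a d - b)) (\<lambda>i. y i + a i / (a d - b)) = r\<^sup>2"
    unfolding enorm_dot by (metis real_sqrt_eq_iff)
  then show "dot (Suc d) a (tau d y) = b \<longleftrightarrow> enorm d (\<lambda>i. y i - c i) = r"
    using core[of a d b y] k D by simp
qed



definition mom :: "nat \<Rightarrow> real \<Rightarrow> (nat\<Rightarrow>real)" where
  "mom d t = (\<lambda>i. if i < d then t ^ Suc i else 0)"

lemma mom_euc: "mom d t \<in> euc d" unfolding mom_def euc_def by auto

definition polyP :: "nat \<Rightarrow> (nat\<Rightarrow>real) \<Rightarrow> real \<Rightarrow> real poly" where
  "polyP d a b = (\<Sum>i<d. monom (2 * a i) (Suc i)) + (\<Sum>i<d. monom (a d - b) (2 * Suc i)) + [:-(a d + b):]"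

lemma poly_polyP: "poly (polyP d a b) t = 2 * dot d a (mom d t) + (a d - b) * dot d (mom d t) (mom d t) - (a d + b)"
proof -
  have A: "dot d a (mom d t) = (\<Sum>i<d. a i * t ^ Suc i)" unfolding dot_def mom_def by simp
  have B: "dot d (mom d t) (mom d t) = (\<Sum>i<d. t ^ (2 * Suc i))" unfolding dot_def
  proof (intro sum.cong refl)
    fix i assume "i \<in> {..<d}"
    then have m: "mom d t i = t ^ Suc i" unfolding mom_def by simp
    show "mom d t i * mom d t i = t ^ (2 * Suc i)" unfolding m by (simp only: mult_2 power_add)
  qed
  have "poly (polyP d a b) t = (\<Sum>i<d. 2 * a i * t ^ Suc i) + (\<Sum>i<d. (a d - b) * t ^ (2 * Suc i)) - (a d + b)"
    unfolding polyP_def by (simp add: poly_sum poly_monom)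
  also have "(\<Sum>i<d. 2 * a i * t ^ Suc i) = 2 * (\<Sum>i<d. a i * t ^ Suc i)"
    by (simp add: sum_distrib_left mult.assoc)
  also have "(\<Sum>i<d. (a d - b) * t ^ (2 * Suc i)) = (a d - b) * (\<Sum>i<d. t ^ (2 * Suc i))"
    by (simp add: sum_distrib_left)
  finally show ?thesis unfolding A B .
qed

lemma coeff_polyP: "coeff (polyP d a b) n = (\<Sum>i<d. if Suc i = n then 2 * a i else 0)
   + (\<Sum>i<d. if 2 * Suc i = n then a d - b else 0) + (if n = 0 then -(a d + b) else 0)"
  unfolding polyP_def coeff_add coeff_sum coeff_monom coeff_pCons' by simp

lemma polyP_nz:
  assumes "d \<ge> 1" "\<exists>i<Suc d. a i \<noteq> 0"
  shows "polyP d a b \<noteq> 0"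
proof (cases "a d = b")
  case False
  have s1: "(\<Sum>i<d. if Suc i = 2 * d then 2 * a i else 0) = 0"
    using assms(1) by (intro sum.neutral) auto
  have "(\<Sum>i<d. if 2 * Suc i = 2 * d then a d - b else 0) = (\<Sum>i<d. if i = d - 1 then a d - b else 0)"
    using assms(1) by (intro sum.cong refl) auto
  also have "\<dots> = a d - b" using assms(1) by simp
  finally have "coeff (polyP d a b) (2*d) = a d - b" unfolding coeff_polyP s1 using assms(1) by simp
  then show ?thesis using False by auto
next
  case True
  show ?thesis
  proof (cases "a d + b = 0")
    case False
    have s1: "(\<Sum>i<d. if Suc i = 0 then 2 * a i else 0) = 0" by simp
    have s2: "(\<Sum>i<d. if 2 * Suc i = 0 then a d - b else 0) = 0" by simp
    have "coeff (polyP d a b) 0 = -(a d + b)" unfolding coeff_polyP s1 s2 by simp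
    then show ?thesis using False by auto
  next
    case T2: True
    then have ad: "a d = 0" using True by simp
    obtain i where i: "i < Suc d" "a i \<noteq> 0" using assms by blast
    then have id: "i < d" using ad by (cases "i = d") auto
    have s2: "(\<Sum>j<d. if 2 * Suc j = Suc i then a d - b else 0) = 0" using True by (intro sum.neutral) auto
    have s1: "(\<Sum>j<d. if Suc j = Suc i then 2 * a j else 0) = 2 * a i" using id by simp
    have "coeff (polyP d a b) (Suc i) = 2 * a i" unfolding coeff_polyP s1 s2 by simp
    then show ?thesis using i by auto
  qed
qed

lemma gam_bad_finite:
  assumes "d \<ge> 1" "\<exists>i<Suc d. a i \<noteq> 0"
  shows "finite {t. dot (Suc d) a (tau d (mom d t)) = b}"
proof -
  have "{t. dot (Suc d) a (tau d (mom d t)) = b} = {t. poly (polyP d a b) t = 0}"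
  proof (intro Collect_cong)
    fix t
    define q where "q = dot d (mom d t) (mom d t)"
    define A where "A = dot d a (mom d t)"
    have qp: "q + 1 > 0" unfolding q_def by (rule q_pos)
    have "dot (Suc d) a (tau d (mom d t)) = b \<longleftrightarrow> 2 * A + a d * (q - 1) = b * (q + 1)"
      unfolding KI A_def[symmetric] q_def[symmetric] using qp by (simp add: divide_eq_eq)
    also have "\<dots> \<longleftrightarrow> poly (polyP d a b) t = 0"
    proof -
      have "2 * A + (a d - b) * q - (a d + b) = (2 * A + a d * (q - 1)) - b * (q + 1)"
        by (simp add: algebra_simps)
      then show ?thesis unfolding poly_polyP A_def[symmetric] q_def[symmetric] by linarith
    qed
    finally show "dot (Suc d) a (tau d (mom d t)) = b \<longleftrightarrow> poly (polyP d a b) t = 0" .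
  qed
  then show ?thesis using poly_roots_finite[OF polyP_nz[OF assms]] by simp
qed

lemma hyp_sections_eq:
  "S \<in> hyp_sections d \<longleftrightarrow> (\<exists>a b. (\<exists>i<Suc d. a i \<noteq> 0) \<and> S = disc d \<inter> hp (Suc d) a b
      \<and> (\<exists>x\<in>euc (Suc d). dot (Suc d) x x < 1 \<and> dot (Suc d) a x = b))"
  unfolding hyp_sections_def is_hyperplane_eq disc_interior_eq hp_def by blast

lemma pole_exists:
  assumes d: "d \<ge> 1" and cS: "countable \<S>" and sub: "\<S> \<subseteq> hyp_sections d"
  shows "\<exists>p\<in>sphr (Suc d). p d \<noteq> 1 \<and> (\<forall>S\<in>\<S>. p \<notin> S)"
proof -
  have fin: "finite {t. tau d (mom d t) \<in> S}" if S: "S \<in> \<S>" for S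
  proof -
    have "S \<in> hyp_sections d" using sub S by blast
    then obtain a b where ab: "\<exists>i<Suc d. a i \<noteq> 0" "S = disc d \<inter> hp (Suc d) a b"
      using hyp_sections_eq[of S d] by blast
    have "{t. tau d (mom d t) \<in> S} = {t. dot (Suc d) a (tau d (mom d t)) = b}"
      using ab(2) tau_sph[of d] sphr_sub_disc[of d] tau_euc[of d] unfolding hp_def by blast
    then show ?thesis using gam_bad_finite[OF d ab(1)] by simp
  qed
  have "countable (\<Union>S\<in>\<S>. {t. tau d (mom d t) \<in> S})"
    using cS fin by (intro countable_UN) (auto intro: countable_finite)
  then obtain t where t: "t \<notin> (\<Union>S\<in>\<S>. {t. tau d (mom d t) \<in> S})"
  proof -
    have "(\<Union>S\<in>\<S>. {t. tau d (mom d t) \<in> S}) \<noteq> UNIV"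
      using uncountable_UNIV_real \<open>countable (\<Union>S\<in>\<S>. {t. tau d (mom d t) \<in> S})\<close> by force
    then show ?thesis using that by blast
  qed
  show ?thesis
    using t tau_sph[of d "mom d t"] tau_d[of d "mom d t"] by blast
qed

definition rf :: "nat \<Rightarrow> (nat\<Rightarrow>real) \<Rightarrow> (nat\<Rightarrow>real) \<Rightarrow> (nat\<Rightarrow>real)" where
  "rf n w x = (\<lambda>i. x i - 2 * dot n w x / dot n w w * w i)"

lemma dot_minus_scale: "dot n a (\<lambda>i. x i - c * w i) = dot n a x - c * dot n a w"
  unfolding dot_def by (simp add: algebra_simps sum_subtractf sum_distrib_left)

lemma dot_diff_left: "dot n (\<lambda>i. x i - y i) z = dot n x z - dot n y z"
  unfolding dot_def by (simp add: algebra_simps sum_subtractf)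

lemma rf_euc: "w \<in> euc n \<Longrightarrow> x \<in> euc n \<Longrightarrow> rf n w x \<in> euc n"
  unfolding rf_def euc_def by auto

lemma dot_rf: "dot n a (rf n w x) = dot n a x - 2 * dot n w x / dot n w w * dot n a w"
  unfolding rf_def by (rule dot_minus_scale)

lemma dot_rf_sym: "dot n a (rf n w x) = dot n (rf n w a) x"
  unfolding dot_rf by (subst (2) dot_comm) (simp add: dot_rf dot_comm)

lemma rf_rf: assumes "dot n w w > 0" shows "rf n w (rf n w x) = x"
proof -
  have "dot n w (rf n w x) = - dot n w x" unfolding dot_rf using assms by simp
  then show ?thesis unfolding rf_def[of n w "rf n w x"] by (simp add: rf_def fun_eq_iff)
qed

lemma dot_rf_rf: assumes "dot n w w > 0" shows "dot n (rf n w x) (rf n w y) = dot n x y"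
  using dot_rf_sym[of n "rf n w x" w y] rf_rf[OF assms] by simp

lemma rf_pole:
  assumes p: "p \<in> sphr (Suc d)" "p d \<noteq> 1"
  defines "w \<equiv> (\<lambda>i. p i - ev d i)"
  shows "rf (Suc d) w p = ev d" "dot (Suc d) w w > 0" "w \<in> euc (Suc d)"
proof -
  have pp: "dot (Suc d) p p = 1" using p unfolding sphr_def by auto
  have ep: "dot (Suc d) (ev d) p = p d" using dot_ev[of d "Suc d" p] by (simp add: dot_comm)
  have ee: "dot (Suc d) (ev d) (ev d) = 1" using dot_ev[of d "Suc d" "ev d"] by (simp add: ev_def)
  have wp: "dot (Suc d) w p = 1 - p d" unfolding w_def dot_diff_left pp ep ..
  have we: "dot (Suc d) w (ev d) = p d - 1" unfolding w_def dot_diff_left ee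
    using dot_comm[of "Suc d" p "ev d"] ep by simp
  have ww: "dot (Suc d) w w = 2 - 2 * p d"
  proof -
    have "dot (Suc d) w w = dot (Suc d) w p - dot (Suc d) w (ev d)"
      by (subst (1) w_def) (simp add: dot_comm[of _ w] dot_diff_left)
    then show ?thesis using wp we by simp
  qed
  have "p d \<le> 1"
  proof -
    have "dot (Suc d) p p = dot d p p + (p d)\<^sup>2" unfolding dot_Suc by (simp add: power2_eq_square)
    then have "(p d)\<^sup>2 \<le> 1" using pp dot_self_nonneg[of d p] by linarith
    moreover have "1 < p d \<Longrightarrow> 1 < (p d)\<^sup>2" by (simp add: one_less_power)
    ultimately show ?thesis by linarith
  qed
  then have pd: "p d < 1" using p(2) by simp
  then show "dot (Suc d) w w > 0" unfolding ww by simp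
  have c: "2 * dot (Suc d) w p / dot (Suc d) w w = 1" unfolding wp ww using pd by (simp add: field_simps)
  have "rf (Suc d) w p = (\<lambda>i. p i - 1 * w i)" unfolding rf_def c ..
  then show "rf (Suc d) w p = ev d" by (simp add: w_def)
  show "w \<in> euc (Suc d)" using p unfolding w_def sphr_def euc_def ev_def by auto
qed



lemma sph_d1:
  assumes "x \<in> sphr (Suc d)" "x d = 1"
  shows "x = ev d"
proof
  fix i
  have "dot (Suc d) x x = dot d x x + (x d)\<^sup>2" unfolding dot_Suc by (simp add: power2_eq_square)
  then have z: "dot d x x = 0" using assms unfolding sphr_def by simp
  show "x i = ev d i"
  proof (cases "i < d")
    case True
    then show ?thesis using z dot_self_pos[of d x] by (auto simp: ev_def)
  next
    case False
    then show ?thesis using assms unfolding sphr_def euc_def ev_def by (cases "i = d") auto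
  qed
qed

lemma sec_params:
  assumes "S \<in> hyp_sections d"
  obtains a b x where "\<exists>i<Suc d. a i \<noteq> 0" "S = disc d \<inter> hp (Suc d) a b"
     "x\<in>euc (Suc d)" "dot (Suc d) x x < 1" "dot (Suc d) a x = b"
  using assms unfolding hyp_sections_eq by blast

lemma mem_sec_sph:
  assumes "S = disc d \<inter> hp (Suc d) a b" "z \<in> sphr (Suc d)"
  shows "z \<in> S \<longleftrightarrow> dot (Suc d) a z = b"
  using assms sphr_sub_disc[of d] unfolding hp_def sphr_def by auto

lemma sec_sub:
  assumes d: "d \<ge> 1" and A: "A \<in> hyp_sections d" and B: "B \<in> hyp_sections d"
    and sub: "A \<inter> sphr (Suc d) \<subseteq> B"
  shows "A \<subseteq> B"
proof
  fix x assume x: "x \<in> A"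
  obtain a1 b1 x1 where A1: "\<exists>i<Suc d. a1 i \<noteq> 0" "A = disc d \<inter> hp (Suc d) a1 b1"
     "x1\<in>euc (Suc d)" "dot (Suc d) x1 x1 < 1" "dot (Suc d) a1 x1 = b1"
    by (rule sec_params[OF A])
  obtain a2 b2 x2 where B1: "\<exists>i<Suc d. a2 i \<noteq> 0" "B = disc d \<inter> hp (Suc d) a2 b2"
     "x2\<in>euc (Suc d)" "dot (Suc d) x2 x2 < 1" "dot (Suc d) a2 x2 = b2"
    by (rule sec_params[OF B])
  obtain i where i: "i < Suc d" "a1 i \<noteq> 0" using A1 by blast
  have xs: "x \<in> euc (Suc d)" "dot (Suc d) x x \<le> 1" "dot (Suc d) a1 x = b1"
    using x A1(2) unfolding disc_eq hp_def by auto
  have "dot (Suc d) a2 x = b2"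
  proof (rule lemmaB[OF _ xs i])
    show "2 \<le> Suc d" using d by simp
    fix y assume y: "y \<in> sphr (Suc d)" "dot (Suc d) a1 y = b1"
    then have "y \<in> A" using mem_sec_sph[OF A1(2)] by blast
    then have "y \<in> B" using sub y by blast
    then show "dot (Suc d) a2 y = b2" using mem_sec_sph[OF B1(2) y(1)] by blast
  qed
  then show "x \<in> B" using B1(2) xs unfolding disc_eq hp_def by auto
qed

lemma sec_meet:
  assumes d: "d \<ge> 2" and A: "A \<in> hyp_sections d" and B: "B \<in> hyp_sections d"
  shows "A \<inter> B \<noteq> {} \<longleftrightarrow> A \<inter> B \<inter> sphr (Suc d) \<noteq> {}"
proof
  assume "A \<inter> B \<noteq> {}"
  then obtain x where x: "x \<in> A" "x \<in> B" by blast
  obtain a1 b1 x1 where A1: "\<exists>i<Suc d. a1 i \<noteq> 0" "A = disc d \<inter> hp (Suc d) a1 b1"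
     "x1\<in>euc (Suc d)" "dot (Suc d) x1 x1 < 1" "dot (Suc d) a1 x1 = b1"
    by (rule sec_params[OF A])
  obtain a2 b2 x2 where B1: "\<exists>i<Suc d. a2 i \<noteq> 0" "B = disc d \<inter> hp (Suc d) a2 b2"
     "x2\<in>euc (Suc d)" "dot (Suc d) x2 x2 < 1" "dot (Suc d) a2 x2 = b2"
    by (rule sec_params[OF B])
  have xs: "x \<in> euc (Suc d)" "dot (Suc d) x x \<le> 1" "dot (Suc d) a1 x = b1" "dot (Suc d) a2 x = b2"
    using x A1(2) B1(2) unfolding disc_eq hp_def by auto
  obtain y where y: "y \<in> sphr (Suc d)" "dot (Suc d) a1 y = b1" "dot (Suc d) a2 y = b2"
    using lemmaA[OF _ xs] d by auto
  then have "y \<in> A" "y \<in> B" using mem_sec_sph[OF A1(2)] mem_sec_sph[OF B1(2)] by blast+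
  then show "A \<inter> B \<inter> sphr (Suc d) \<noteq> {}" using y by blast
qed blast



lemma sec_to_sph:
  assumes d: "d \<ge> 2" and cS: "countable \<S>" and sub: "\<S> \<subseteq> hyp_sections d"
  shows "\<exists>g. inj_on g \<S> \<and> g ` \<S> \<subseteq> spheres d \<and>
             (\<forall>A\<in>\<S>. \<forall>B\<in>\<S>. A \<inter> B \<noteq> {} \<longleftrightarrow> g A \<inter> g B \<noteq> {})"
proof -
  obtain p where p: "p \<in> sphr (Suc d)" "p d \<noteq> 1" "\<forall>S\<in>\<S>. p \<notin> S"
    using pole_exists[OF _ cS sub] d by auto
  define w where "w = (\<lambda>i. p i - ev d i)"
  have w: "rf (Suc d) w p = ev d" "dot (Suc d) w w > 0" "w \<in> euc (Suc d)"
    using rf_pole[OF p(1,2)] unfolding w_def by auto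
  define R where "R = rf (Suc d) w"
  have RR: "R (R x) = x" for x unfolding R_def by (rule rf_rf[OF w(2)])
  have Rsph: "R x \<in> sphr (Suc d)" if "x \<in> sphr (Suc d)" for x
    using that rf_euc[OF w(3)] dot_rf_rf[OF w(2)] unfolding R_def sphr_def by auto
  have "R (ev d) = R (R p)" using w(1) unfolding R_def by simp
  then have Re: "R (ev d) = p" using RR by simp
  define g where "g S = {y \<in> euc d. R (tau d y) \<in> S}" for S
  have bk: "sig d (R z) \<in> g S \<and> R (tau d (sig d (R z))) = z" if S: "S \<in> \<S>" and z: "z \<in> S" "z \<in> sphr (Suc d)" for S z
  proof -
    have Rz: "R z \<in> sphr (Suc d)" using Rsph z by blast
    have "R z d \<noteq> 1"
    proof
      assume "R z d = 1"
      then have "R z = ev d" using sph_d1 Rz by blast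
      moreover have "z = R (R z)" by (simp add: RR)
      ultimately have "z = p" using Re by simp
      then show False using p(3) S z by blast
    qed
    then have t: "tau d (sig d (R z)) = R z" using tau_sig Rz by blast
    then show ?thesis unfolding g_def using sig_euc RR z by auto
  qed
  have gsph: "g S \<in> spheres d" if S: "S \<in> \<S>" for S
  proof -
    have Sh: "S \<in> hyp_sections d" using sub S by blast
    obtain a b x where ab: "\<exists>i<Suc d. a i \<noteq> 0" "S = disc d \<inter> hp (Suc d) a b"
      "x\<in>euc (Suc d)" "dot (Suc d) x x < 1" "dot (Suc d) a x = b"
      by (rule sec_params[OF Sh])
    have "g S = {y \<in> euc d. dot (Suc d) (R a) (tau d y) = b}"
      unfolding g_def
    proof (intro Collect_cong conj_cong refl)
      fix y
      have "R (tau d y) \<in> sphr (Suc d)" using Rsph tau_sph by blast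
      then have "R (tau d y) \<in> S \<longleftrightarrow> dot (Suc d) a (R (tau d y)) = b" by (rule mem_sec_sph[OF ab(2)])
      then show "R (tau d y) \<in> S \<longleftrightarrow> dot (Suc d) (R a) (tau d y) = b"
        unfolding R_def dot_rf_sym by simp
    qed
    moreover have "(R a) d \<noteq> b"
    proof -
      have "(R a) d = dot (Suc d) (R a) (ev d)" using dot_ev[of d "Suc d" "R a"] by simp
      also have "\<dots> = dot (Suc d) a (R (ev d))" unfolding R_def dot_rf_sym ..
      also have "\<dots> = dot (Suc d) a p" using Re by simp
      finally show ?thesis using mem_sec_sph[OF ab(2) p(1)] p(3) S by auto
    qed
    moreover have "b\<^sup>2 < dot (Suc d) (R a) (R a)"
      using crit1[OF ab(3,4,5,1)] dot_rf_rf[OF w(2)] unfolding R_def by simp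
    ultimately show ?thesis using SphL by simp
  qed
  have meet: "A \<inter> B \<noteq> {} \<longleftrightarrow> g A \<inter> g B \<noteq> {}" if A: "A \<in> \<S>" and B: "B \<in> \<S>" for A B
  proof -
    have "A \<inter> B \<noteq> {} \<longleftrightarrow> A \<inter> B \<inter> sphr (Suc d) \<noteq> {}" using sec_meet[OF d] sub A B by blast
    also have "\<dots> \<longleftrightarrow> g A \<inter> g B \<noteq> {}"
    proof
      assume "A \<inter> B \<inter> sphr (Suc d) \<noteq> {}"
      then obtain z where z: "z \<in> A" "z \<in> B" "z \<in> sphr (Suc d)" by blast
      then show "g A \<inter> g B \<noteq> {}" using bk[OF A z(1,3)] bk[OF B z(2,3)] by blast
    next
      assume "g A \<inter> g B \<noteq> {}"
      then obtain y where "y \<in> g A" "y \<in> g B" by blast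
      then have "R (tau d y) \<in> A \<inter> B \<inter> sphr (Suc d)" unfolding g_def using Rsph tau_sph by blast
      then show "A \<inter> B \<inter> sphr (Suc d) \<noteq> {}" by blast
    qed
    finally show ?thesis .
  qed
  have sub1: "A \<inter> sphr (Suc d) \<subseteq> B" if A: "A \<in> \<S>" and B: "B \<in> \<S>" and eq: "g A = g B" for A B
  proof
    fix z assume z: "z \<in> A \<inter> sphr (Suc d)"
    then have "sig d (R z) \<in> g B" "R (tau d (sig d (R z))) = z" using bk[OF A] eq by auto
    then show "z \<in> B" unfolding g_def by auto
  qed
  have "inj_on g \<S>"
  proof (rule inj_onI)
    fix A B assume A: "A \<in> \<S>" and B: "B \<in> \<S>" and eq: "g A = g B"
    have "A \<subseteq> B" using sec_sub[OF _ _ _ sub1[OF A B eq]] d sub A B by auto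
    moreover have "B \<subseteq> A" using sec_sub[OF _ _ _ sub1[OF B A eq[symmetric]]] d sub A B by auto
    ultimately show "A = B" by blast
  qed
  then show ?thesis using gsph meet by blast
qed



definition ha :: "nat \<Rightarrow> (nat\<Rightarrow>real) \<Rightarrow> real \<Rightarrow> (nat\<Rightarrow>real)" where
  "ha d c r = (\<lambda>i. if i < d then - c i else if i = d then (1 + r\<^sup>2 - dot d c c) / 2 else 0)"
definition hb :: "nat \<Rightarrow> (nat\<Rightarrow>real) \<Rightarrow> real \<Rightarrow> real" where
  "hb d c r = (r\<^sup>2 - dot d c c - 1) / 2"

lemma HypL':
  assumes c: "c \<in> euc d" and r: "r > 0"
  shows "ha d c r d - hb d c r = 1" "(hb d c r)\<^sup>2 < dot (Suc d) (ha d c r) (ha d c r)"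
    "\<exists>i<Suc d. ha d c r i \<noteq> 0"
    "\<And>y. y \<in> euc d \<Longrightarrow> dot (Suc d) (ha d c r) (tau d y) = hb d c r \<longleftrightarrow> enorm d (\<lambda>i. y i - c i) = r"
  unfolding ha_def hb_def using HypL[OF c r] by auto

lemma sph_to_sec:
  assumes d: "d \<ge> 2" and sub: "\<T> \<subseteq> spheres d"
  shows "\<exists>g. inj_on g \<T> \<and> g ` \<T> \<subseteq> hyp_sections d \<and>
             (\<forall>A\<in>\<T>. \<forall>B\<in>\<T>. A \<inter> B \<noteq> {} \<longleftrightarrow> g A \<inter> g B \<noteq> {})"
proof -
  have "\<exists>cr. fst cr \<in> euc d \<and> snd cr > 0 \<and> T = {x \<in> euc d. enorm d (\<lambda>i. x i - fst cr i) = snd cr}"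
    if T: "T \<in> \<T>" for T
  proof -
    have "T \<in> spheres d" using sub T by blast
    then obtain c r where "c \<in> euc d" "r > 0" "T = {x \<in> euc d. enorm d (\<lambda>i. x i - c i) = r}"
      unfolding spheres_def by blast
    then show ?thesis by (intro exI[of _ "(c, r)"]) simp
  qed
  then have "\<forall>T\<in>\<T>. \<exists>cr. fst cr \<in> euc d \<and> snd cr > 0 \<and> T = {x \<in> euc d. enorm d (\<lambda>i. x i - fst cr i) = snd cr}"
    by blast
  from bchoice[OF this] obtain CR where CR0: "\<forall>T\<in>\<T>. fst (CR T) \<in> euc d \<and> snd (CR T) > 0 \<and>
      T = {x \<in> euc d. enorm d (\<lambda>i. x i - fst (CR T) i) = snd (CR T)}"
    by blast
  have CR: "fst (CR T) \<in> euc d \<and> snd (CR T) > 0 \<and>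
      T = {x \<in> euc d. enorm d (\<lambda>i. x i - fst (CR T) i) = snd (CR T)}" if "T \<in> \<T>" for T
    using CR0 that by blast
  define a where "a T = ha d (fst (CR T)) (snd (CR T))" for T
  define b where "b T = hb d (fst (CR T)) (snd (CR T))" for T
  define g where "g T = disc d \<inter> hp (Suc d) (a T) (b T)" for T
  have props: "a T d - b T = 1" "(b T)\<^sup>2 < dot (Suc d) (a T) (a T)" "\<exists>i<Suc d. a T i \<noteq> 0"
     "\<And>y. y \<in> euc d \<Longrightarrow> y \<in> T \<longleftrightarrow> tau d y \<in> g T" if T: "T \<in> \<T>" for T
  proof -
    have c: "fst (CR T) \<in> euc d" "snd (CR T) > 0" using CR[OF T] by auto
    show "a T d - b T = 1" "(b T)\<^sup>2 < dot (Suc d) (a T) (a T)" "\<exists>i<Suc d. a T i \<noteq> 0"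
      unfolding a_def b_def using HypL'[OF c] by auto
    fix y assume y: "y \<in> euc d"
    have "tau d y \<in> g T \<longleftrightarrow> dot (Suc d) (a T) (tau d y) = b T"
      using mem_sec_sph[OF g_def tau_sph] by blast
    also have "\<dots> \<longleftrightarrow> enorm d (\<lambda>i. y i - fst (CR T) i) = snd (CR T)"
      unfolding a_def b_def using HypL'(4)[OF c y] .
    also have "\<dots> \<longleftrightarrow> y \<in> T" using CR[OF T] y by blast
    finally show "y \<in> T \<longleftrightarrow> tau d y \<in> g T" by blast
  qed
  have gsec: "g T \<in> hyp_sections d" if T: "T \<in> \<T>" for T
    using props[OF T] crit2[of "b T" "Suc d" "a T"] unfolding hyp_sections_eq g_def by blast
  have Tsub: "T \<subseteq> euc d" if "T \<in> \<T>" for T using CR[OF that] by blast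
  have bk: "sig d z \<in> T" if T: "T \<in> \<T>" and z: "z \<in> g T" "z \<in> sphr (Suc d)" for T z
  proof -
    have "z d \<noteq> 1"
    proof
      assume "z d = 1"
      then have "z = ev d" using sph_d1 z by blast
      then have "dot (Suc d) (a T) (ev d) = b T" using mem_sec_sph[OF g_def z(2)] z(1) by blast
      then show False using dot_ev[of d "Suc d" "a T"] props(1)[OF T] by simp
    qed
    then have "tau d (sig d z) = z" using tau_sig z by blast
    then show ?thesis using props(4)[OF T sig_euc] z by simp
  qed
  have meet: "A \<inter> B \<noteq> {} \<longleftrightarrow> g A \<inter> g B \<noteq> {}" if A: "A \<in> \<T>" and B: "B \<in> \<T>" for A B
  proof
    assume "A \<inter> B \<noteq> {}"
    then obtain y where "y \<in> A" "y \<in> B" by blast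
    then show "g A \<inter> g B \<noteq> {}" using props(4)[OF A] props(4)[OF B] Tsub[OF A] by blast
  next
    assume "g A \<inter> g B \<noteq> {}"
    then have "g A \<inter> g B \<inter> sphr (Suc d) \<noteq> {}" using sec_meet[OF d gsec[OF A] gsec[OF B]] by blast
    then obtain z where "z \<in> g A" "z \<in> g B" "z \<in> sphr (Suc d)" by blast
    then show "A \<inter> B \<noteq> {}" using bk[OF A] bk[OF B] by blast
  qed
  have "inj_on g \<T>"
  proof (rule inj_onI)
    fix A B assume A: "A \<in> \<T>" and B: "B \<in> \<T>" and eq: "g A = g B"
    show "A = B"
      using props(4)[OF A] props(4)[OF B] Tsub[OF A] Tsub[OF B] eq by blast
  qed
  then show ?thesis using gsec meet by blast
qed



lemma transfer:
  assumes "is_intersection_graph_of F V E"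
    and "\<And>f. inj_on f V \<Longrightarrow> f ` V \<subseteq> F \<Longrightarrow> \<exists>g. inj_on g (f ` V) \<and> g ` (f ` V) \<subseteq> F' \<and>
             (\<forall>A\<in>f ` V. \<forall>B\<in>f ` V. A \<inter> B \<noteq> {} \<longleftrightarrow> g A \<inter> g B \<noteq> {})"
  shows "is_intersection_graph_of F' V E"
proof -
  obtain f where f: "inj_on f V" "f ` V \<subseteq> F"
    "\<forall>u\<in>V. \<forall>v\<in>V. u \<noteq> v \<longrightarrow> (E u v \<longleftrightarrow> f u \<inter> f v \<noteq> {})"
    using assms(1) unfolding is_intersection_graph_of_def by (elim exE conjE) (rule that; assumption)
  obtain g where g: "inj_on g (f ` V)" "g ` (f ` V) \<subseteq> F'"
    "\<forall>A\<in>f ` V. \<forall>B\<in>f ` V. A \<inter> B \<noteq> {} \<longleftrightarrow> g A \<inter> g B \<noteq> {}"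
    using assms(2)[OF f(1,2)] by (elim exE conjE) (rule that; assumption)
  have "inj_on (g \<circ> f) V" using f(1) g(1) by (rule comp_inj_on)
  moreover have "(g \<circ> f) ` V \<subseteq> F'" using g(2) by auto
  moreover have "\<forall>u\<in>V. \<forall>v\<in>V. u \<noteq> v \<longrightarrow> (E u v \<longleftrightarrow> (g \<circ> f) u \<inter> (g \<circ> f) v \<noteq> {})"
    using f(3) g(3) by auto
  ultimately show ?thesis unfolding is_intersection_graph_of_def by blast
qed

theorem main_ge2:
  assumes "d \<ge> 2" and "countable V"
  shows "is_intersection_graph_of (hyp_sections d) V E \<longleftrightarrow> is_intersection_graph_of (spheres d) V E"
proof
  assume H: "is_intersection_graph_of (hyp_sections d) V E"
  show "is_intersection_graph_of (spheres d) V E"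
  proof (rule transfer[OF H])
    fix f assume f: "inj_on f V" "f ` V \<subseteq> hyp_sections d"
    have "countable (f ` V)" using assms(2) by (rule countable_image)
    then show "\<exists>g. inj_on g (f ` V) \<and> g ` (f ` V) \<subseteq> spheres d \<and>
             (\<forall>A\<in>f ` V. \<forall>B\<in>f ` V. A \<inter> B \<noteq> {} \<longleftrightarrow> g A \<inter> g B \<noteq> {})"
      using sec_to_sph[OF assms(1) _ f(2)] by blast
  qed
next
  assume H: "is_intersection_graph_of (spheres d) V E"
  show "is_intersection_graph_of (hyp_sections d) V E"
  proof (rule transfer[OF H])
    fix f assume f: "inj_on f V" "f ` V \<subseteq> spheres d"
    show "\<exists>g. inj_on g (f ` V) \<and> g ` (f ` V) \<subseteq> hyp_sections d \<and>
             (\<forall>A\<in>f ` V. \<forall>B\<in>f ` V. A \<inter> B \<noteq> {} \<longleftrightarrow> g A \<inter> g B \<noteq> {})"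
      using sph_to_sec[OF assms(1) f(2)] by blast
  qed
qed




definition psi :: "complex \<Rightarrow> (nat \<Rightarrow> real)" where
  "psi z = (\<lambda>i. if i = 0 then Re z else if i = 1 then Im z else 0)"

definition cpx :: "(nat \<Rightarrow> real) \<Rightarrow> complex" where
  "cpx x = Complex (x 0) (x 1)"

lemma cpx_psi[simp]: "cpx (psi z) = z"
  unfolding cpx_def psi_def by (simp add: complex_eq_iff)

lemma psi_euc: "psi z \<in> euc 2"
  unfolding psi_def euc_def by auto

lemma psi_cpx: "x \<in> euc 2 \<Longrightarrow> psi (cpx x) = x"
  unfolding psi_def cpx_def euc_def by (auto simp: fun_eq_iff)

lemma inj_cpx: "inj_on cpx (euc 2)"
  by (metis inj_onI psi_cpx)

lemma dot2: "dot 2 x y = x 0 * y 0 + x 1 * y 1"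
  unfolding dot_def by (simp add: numeral_2_eq_2)

lemma cpx_norm2: "(cmod (cpx x))\<^sup>2 = dot 2 x x"
  unfolding dot2 cpx_def cmod_def by (simp add: power2_eq_square)

lemma psi_comb: "psi ((1 - u) *\<^sub>R P + u *\<^sub>R Q) = (\<lambda>i. (1 - u) * psi P i + u * psi Q i)"
  unfolding psi_def by (auto simp: fun_eq_iff)

definition perp :: "(nat \<Rightarrow> real) \<Rightarrow> (nat \<Rightarrow> real)" where
  "perp a = (\<lambda>i. if i = 0 then - a 1 else if i = 1 then a 0 else 0)"

lemma perp_euc: "perp a \<in> euc 2" unfolding perp_def euc_def by auto

lemma dot_perp: "dot 2 a (perp a) = 0" unfolding dot2 perp_def by simp

lemma perp_pos: assumes "\<exists>i<2. a i \<noteq> 0" shows "dot 2 (perp a) (perp a) > 0"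
proof -
  obtain i where i: "i < 2" "a i \<noteq> 0" using assms by blast
  have "\<exists>j<2. perp a j \<noteq> 0"
  proof (cases "i = 0")
    case True
    then show ?thesis using i by (intro exI[of _ 1]) (simp add: perp_def)
  next
    case False
    then have "i = 1" using i by simp
    then show ?thesis using i by (intro exI[of _ 0]) (simp add: perp_def)
  qed
  then show ?thesis using dot_self_pos by blast
qed

lemma kernel_2d:
  assumes a: "\<exists>i<2. a i \<noteq> 0" and D: "D \<in> euc 2" "dot 2 a D = 0"
  shows "D = (\<lambda>i. (dot 2 (perp a) D / dot 2 (perp a) (perp a)) * perp a i)"
proof -
  define n where "n = dot 2 (perp a) (perp a)"
  have n: "n > 0" using perp_pos[OF a] unfolding n_def .
  have n2: "n = (a 0)\<^sup>2 + (a 1)\<^sup>2" unfolding n_def dot2 perp_def by (simp add: power2_eq_square)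
  have e: "a 0 * D 0 + a 1 * D 1 = 0" using D(2) unfolding dot2 .
  have pd: "dot 2 (perp a) D = - a 1 * D 0 + a 0 * D 1" unfolding dot2 perp_def by simp
  have c0: "D 0 = (- a 1 * D 0 + a 0 * D 1) / n * (- a 1)"
  proof -
    have "(- a 1 * D 0 + a 0 * D 1) * (- a 1) = (a 1)\<^sup>2 * D 0 - a 0 * (a 1 * D 1)"
      by (simp add: algebra_simps power2_eq_square)
    also have "a 1 * D 1 = - (a 0 * D 0)" using e by linarith
    finally have "(- a 1 * D 0 + a 0 * D 1) * (- a 1) = n * D 0" unfolding n2
      by (simp add: algebra_simps power2_eq_square)
    then show ?thesis using n by (simp add: field_simps)
  qed
  have c1: "D 1 = (- a 1 * D 0 + a 0 * D 1) / n * a 0"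
  proof -
    have "(- a 1 * D 0 + a 0 * D 1) * a 0 = - a 1 * (a 0 * D 0) + (a 0)\<^sup>2 * D 1"
      by (simp add: algebra_simps power2_eq_square)
    also have "a 0 * D 0 = - (a 1 * D 1)" using e by linarith
    finally have "(- a 1 * D 0 + a 0 * D 1) * a 0 = n * D 1" unfolding n2
      by (simp add: algebra_simps power2_eq_square)
    then show ?thesis using n by (simp add: field_simps)
  qed
  show ?thesis
  proof
    fix i
    show "D i = dot 2 (perp a) D / dot 2 (perp a) (perp a) * perp a i"
      unfolding n_def[symmetric] pd
      using c0 c1 D(1) by (cases "i = 0"; cases "i = 1") (auto simp: perp_def euc_def)
  qed
qed

lemma seg_gen:
  assumes a: "\<exists>i<2. a i \<noteq> 0" and x: "x \<in> euc 2" "dot 2 a x = b" and t: "t1 < t2"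
    and iff: "\<And>\<mu>. dot 2 (lin x \<mu> (perp a)) (lin x \<mu> (perp a)) \<le> 1 \<longleftrightarrow> t1 \<le> \<mu> \<and> \<mu> \<le> t2"
  shows "disc 1 \<inter> hp 2 a b = psi ` closed_segment (cpx (lin x t1 (perp a))) (cpx (lin x t2 (perp a)))"
proof -
  define v where "v = perp a"
  have v: "v \<in> euc 2" "dot 2 a v = 0" unfolding v_def using perp_euc dot_perp by auto
  have L: "disc 1 \<inter> hp 2 a b = {lin x \<mu> v | \<mu>. t1 \<le> \<mu> \<and> \<mu> \<le> t2}"
  proof (intro equalityI subsetI)
    fix y assume y: "y \<in> disc 1 \<inter> hp 2 a b"
    then have ye: "y \<in> euc 2" "dot 2 a y = b" "dot 2 y y \<le> 1"
      unfolding disc_eq hp_def by (auto simp: numeral_2_eq_2)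
    define D where "D = (\<lambda>i. y i - x i)"
    have De: "D \<in> euc 2" using ye x unfolding D_def euc_def by auto
    have "dot 2 a D = 0" unfolding D_def dot_def using ye x unfolding dot_def
      by (simp add: algebra_simps sum_subtractf)
    from kernel_2d[OF a De this] obtain \<mu> where "D = (\<lambda>i. \<mu> * v i)" unfolding v_def by blast
    then have yl: "y = lin x \<mu> v" unfolding lin_def D_def by (auto simp: fun_eq_iff algebra_simps dest: fun_cong)
    then have "t1 \<le> \<mu> \<and> \<mu> \<le> t2" using iff ye(3) unfolding v_def by simp
    then show "y \<in> {lin x \<mu> v | \<mu>. t1 \<le> \<mu> \<and> \<mu> \<le> t2}" using yl by blast
  next
    fix y assume "y \<in> {lin x \<mu> v | \<mu>. t1 \<le> \<mu> \<and> \<mu> \<le> t2}"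
    then obtain \<mu> where m: "y = lin x \<mu> v" "t1 \<le> \<mu>" "\<mu> \<le> t2" by blast
    have "dot 2 y y \<le> 1" using iff m unfolding v_def by simp
    moreover have "y \<in> euc 2" using lin_euc[OF x(1) v(1)] m by simp
    moreover have "dot 2 a y = b" using m x v by (simp add: dot_lin_right)
    ultimately show "y \<in> disc 1 \<inter> hp 2 a b" unfolding disc_eq hp_def by (auto simp: numeral_2_eq_2)
  qed
  have "{lin x \<mu> v | \<mu>. t1 \<le> \<mu> \<and> \<mu> \<le> t2} = psi ` closed_segment (cpx (lin x t1 v)) (cpx (lin x t2 v))"
  proof (intro equalityI subsetI)
    fix y assume "y \<in> {lin x \<mu> v | \<mu>. t1 \<le> \<mu> \<and> \<mu> \<le> t2}"
    then obtain \<mu> where m: "y = lin x \<mu> v" "t1 \<le> \<mu>" "\<mu> \<le> t2" by blast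
    define u where "u = (\<mu> - t1) / (t2 - t1)"
    have u: "0 \<le> u" "u \<le> 1" unfolding u_def using m t by auto
    have uu: "u * (t2 - t1) = \<mu> - t1" unfolding u_def using t by simp
    have "(1 - u) * t1 + u * t2 = t1 + u * (t2 - t1)" by (simp add: algebra_simps)
    then have mu: "\<mu> = (1 - u) * t1 + u * t2" using uu by linarith
    have "psi ((1 - u) *\<^sub>R cpx (lin x t1 v) + u *\<^sub>R cpx (lin x t2 v))
        = (\<lambda>i. (1 - u) * lin x t1 v i + u * lin x t2 v i)"
      unfolding psi_comb using psi_cpx[OF lin_euc[OF x(1) v(1)]] by simp
    also have "\<dots> = lin x \<mu> v" unfolding lin_def mu by (simp add: fun_eq_iff algebra_simps)
    finally have "y = psi ((1 - u) *\<^sub>R cpx (lin x t1 v) + u *\<^sub>R cpx (lin x t2 v))" using m(1) by simp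
    then show "y \<in> psi ` closed_segment (cpx (lin x t1 v)) (cpx (lin x t2 v))"
      unfolding closed_segment_def using u by blast
  next
    fix y assume "y \<in> psi ` closed_segment (cpx (lin x t1 v)) (cpx (lin x t2 v))"
    then obtain u where u: "0 \<le> u" "u \<le> 1"
      "y = psi ((1 - u) *\<^sub>R cpx (lin x t1 v) + u *\<^sub>R cpx (lin x t2 v))"
      unfolding closed_segment_def by blast
    define \<mu> where "\<mu> = (1 - u) * t1 + u * t2"
    have "psi ((1 - u) *\<^sub>R cpx (lin x t1 v) + u *\<^sub>R cpx (lin x t2 v))
        = (\<lambda>i. (1 - u) * lin x t1 v i + u * lin x t2 v i)"
      unfolding psi_comb using psi_cpx[OF lin_euc[OF x(1) v(1)]] by simp
    also have "\<dots> = lin x \<mu> v" unfolding lin_def \<mu>_def by (simp add: fun_eq_iff algebra_simps)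
    finally have "y = lin x \<mu> v" using u(3) by simp
    moreover have "t1 \<le> \<mu>" "\<mu> \<le> t2"
    proof -
      have h: "\<mu> = t1 + u * (t2 - t1)" unfolding \<mu>_def by (simp add: algebra_simps)
      have h1: "0 \<le> u * (t2 - t1)" using u t by simp
      have h2: "u * (t2 - t1) \<le> t2 - t1" using mult_right_mono[of u 1 "t2 - t1"] u t by simp
      show "t1 \<le> \<mu>" unfolding h using h1 by linarith
      show "\<mu> \<le> t2" unfolding h using h2 by linarith
    qed
    ultimately show "y \<in> {lin x \<mu> v | \<mu>. t1 \<le> \<mu> \<and> \<mu> \<le> t2}" by blast
  qed
  then show ?thesis using L unfolding v_def by simp
qed

lemma sec_is_chord:
  assumes S: "S \<in> hyp_sections 1"
  shows "\<exists>C\<in>chords. S = psi ` C"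
proof -
  obtain a b x where ab: "\<exists>i<Suc 1. a i \<noteq> 0" "S = disc 1 \<inter> hp (Suc 1) a b"
     "x\<in>euc (Suc 1)" "dot (Suc 1) x x < 1" "dot (Suc 1) a x = b"
    using S unfolding hyp_sections_eq by blast
  have a: "\<exists>i<2. a i \<noteq> 0" using ab(1) by (simp add: numeral_2_eq_2)
  have S2: "S = disc 1 \<inter> hp 2 a b" using ab(2) by (simp add: numeral_2_eq_2)
  have x: "x \<in> euc 2" "dot 2 x x < 1" "dot 2 a x = b" using ab(3-5) by (simp_all add: numeral_2_eq_2)
  obtain t1 t2 where t: "t1 < t2" "\<forall>\<mu>. dot 2 (lin x \<mu> (perp a)) (lin x \<mu> (perp a)) \<le> 1 \<longleftrightarrow> t1 \<le> \<mu> \<and> \<mu> \<le> t2"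
    "dot 2 (lin x t1 (perp a)) (lin x t1 (perp a)) = 1" "dot 2 (lin x t2 (perp a)) (lin x t2 (perp a)) = 1"
    using line_hit[OF x(2) perp_pos[OF a]] by blast
  define P where "P = cpx (lin x t1 (perp a))"
  define Q where "Q = cpx (lin x t2 (perp a))"
  have eq: "S = psi ` closed_segment P Q" unfolding S2 P_def Q_def
    by (rule seg_gen[OF a x(1,3) t(1)]) (use t(2) in blast)
  have nP: "cmod P = 1" using cpx_norm2[of "lin x t1 (perp a)"] t(3) unfolding P_def
    by (simp add: power2_eq_1_iff) (smt (verit) norm_ge_zero)
  have nQ: "cmod Q = 1" using cpx_norm2[of "lin x t2 (perp a)"] t(4) unfolding Q_def
    by (simp add: power2_eq_1_iff) (smt (verit) norm_ge_zero)
  have "P \<noteq> Q"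
  proof
    assume "P = Q"
    then have "lin x t1 (perp a) = lin x t2 (perp a)"
      unfolding P_def Q_def using psi_cpx lin_euc[OF x(1) perp_euc] by metis
    then have "\<forall>i. t1 * perp a i = t2 * perp a i" unfolding lin_def by (metis add_left_cancel)
    then have "\<forall>i. perp a i = 0" using t(1) by auto
    then show False using perp_pos[OF a] unfolding dot_def by simp
  qed
  then have "closed_segment P Q \<in> chords" unfolding chords_def using nP nQ by blast
  then show ?thesis using eq by blast
qed

lemma chord_is_sec:
  assumes C: "C \<in> chords"
  shows "psi ` C \<in> hyp_sections 1"
proof -
  obtain p q where pq: "C = closed_segment p q" "cmod p = 1" "cmod q = 1" "p \<noteq> q"
    using C unfolding chords_def by blast
  define a :: "nat \<Rightarrow> real" where "a = (\<lambda>i. if i = 0 then - (Im q - Im p) else if i = 1 then Re q - Re p else 0)"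
  define x where "x = psi ((p + q) / 2)"
  define b where "b = dot 2 a x"
  have p2: "(Re p)\<^sup>2 + (Im p)\<^sup>2 = 1" using pq(2) unfolding cmod_def by simp
  have q2: "(Re q)\<^sup>2 + (Im q)\<^sup>2 = 1" using pq(3) unfolding cmod_def by simp
  have pa: "perp a = (\<lambda>i. if i = 0 then Re p - Re q else if i = 1 then Im p - Im q else 0)"
    unfolding perp_def a_def by (auto simp: fun_eq_iff)
  have a: "\<exists>i<2. a i \<noteq> 0"
  proof (rule ccontr)
    assume "\<not> (\<exists>i<2. a i \<noteq> 0)"
    then have "a 0 = 0" "a 1 = 0" by auto
    then have "Re p = Re q" "Im p = Im q" unfolding a_def by auto
    then show False using pq(4) by (simp add: complex_eq_iff)
  qed
  define n where "n = dot 2 (perp a) (perp a)"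
  have n: "n > 0" unfolding n_def using perp_pos[OF a] .
  have xv: "dot 2 x (perp a) = 0" unfolding dot2 pa x_def psi_def using p2 q2
    by (simp add: algebra_simps power2_eq_square) (simp add: field_simps)
  have xx: "dot 2 x x = 1 - n / 4" unfolding n_def dot2 pa x_def psi_def using p2 q2
    by (simp add: algebra_simps power2_eq_square) (simp add: field_simps)
  have iff: "dot 2 (lin x \<mu> (perp a)) (lin x \<mu> (perp a)) \<le> 1 \<longleftrightarrow> -(1/2) \<le> \<mu> \<and> \<mu> \<le> 1/2" for \<mu>
  proof -
    have "dot 2 (lin x \<mu> (perp a)) (lin x \<mu> (perp a)) = 1 - n / 4 + \<mu>\<^sup>2 * n"
      unfolding dot_lin_self xv xx n_def by simp
    also have "\<dots> \<le> 1 \<longleftrightarrow> \<mu>\<^sup>2 \<le> (1/2)\<^sup>2" using n by (simp add: field_simps power2_eq_square)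
    also have "\<dots> \<longleftrightarrow> \<bar>\<mu>\<bar> \<le> 1/2" by (simp add: abs_le_square_iff[symmetric])
    finally show ?thesis by linarith
  qed
  have xe: "x \<in> euc 2" unfolding x_def by (rule psi_euc)
  have seg: "disc 1 \<inter> hp 2 a b = psi ` closed_segment (cpx (lin x (-(1/2)) (perp a))) (cpx (lin x (1/2) (perp a)))"
    by (rule seg_gen[OF a xe b_def[symmetric]]) (use iff in auto)
  have e1: "cpx (lin x (-(1/2)) (perp a)) = q" unfolding cpx_def lin_def pa x_def psi_def
    by (simp add: complex_eq_iff field_simps)
  have e2: "cpx (lin x (1/2) (perp a)) = p" unfolding cpx_def lin_def pa x_def psi_def
    by (simp add: complex_eq_iff field_simps)
  have S: "psi ` C = disc 1 \<inter> hp 2 a b" unfolding seg e1 e2 pq(1) by (simp add: closed_segment_commute)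
  have "is_hyperplane (Suc 1) (hp 2 a b)" unfolding is_hyperplane_eq using a
    by (auto simp: numeral_2_eq_2)
  moreover have "x \<in> hp 2 a b \<inter> disc_interior 1" unfolding hp_def disc_interior_eq b_def
    using xe xx n by (auto simp: numeral_2_eq_2)
  ultimately show ?thesis unfolding hyp_sections_def S by (auto simp: numeral_2_eq_2)
qed

lemma img_meet: "inj_on h X \<Longrightarrow> A \<subseteq> X \<Longrightarrow> B \<subseteq> X \<Longrightarrow> (h ` A \<inter> h ` B \<noteq> {} \<longleftrightarrow> A \<inter> B \<noteq> {})"
  using inj_on_image_Int[of h X A B] by auto

lemma img_inj: "inj_on h X \<Longrightarrow> (\<forall>A\<in>F. A \<subseteq> X) \<Longrightarrow> inj_on (image h) F"
  unfolding inj_on_def by (metis inj_on_image_eq_iff inj_on_def)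

theorem main_1:
  "is_intersection_graph_of (hyp_sections 1) V E \<longleftrightarrow> is_intersection_graph_of chords V E"
proof
  assume H: "is_intersection_graph_of (hyp_sections 1) V E"
  have sub: "S \<subseteq> euc 2" if "S \<in> hyp_sections 1" for S
    using sec_is_chord[OF that] psi_euc by blast
  show "is_intersection_graph_of chords V E"
  proof (rule transfer[OF H])
    fix f assume f: "inj_on f V" "f ` V \<subseteq> hyp_sections 1"
    show "\<exists>g. inj_on g (f ` V) \<and> g ` (f ` V) \<subseteq> chords \<and>
             (\<forall>A\<in>f ` V. \<forall>B\<in>f ` V. A \<inter> B \<noteq> {} \<longleftrightarrow> g A \<inter> g B \<noteq> {})"
    proof (intro exI[of _ "image cpx"] conjI ballI)
      have "\<forall>A\<in>f ` V. A \<subseteq> euc 2" using sub f(2) by blast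
      then show "inj_on (image cpx) (f ` V)" by (rule img_inj[OF inj_cpx])
      show "image cpx ` f ` V \<subseteq> chords"
      proof
        fix C assume "C \<in> image cpx ` f ` V"
        then obtain S where S: "S \<in> hyp_sections 1" "C = cpx ` S" using f(2) by blast
        obtain C' where "C' \<in> chords" "S = psi ` C'" using sec_is_chord[OF S(1)] by blast
        then show "C \<in> chords" using S(2) by (simp add: image_image)
      qed
      fix A B assume AB: "A \<in> f ` V" "B \<in> f ` V"
      have "A \<subseteq> euc 2" "B \<subseteq> euc 2" using AB sub f(2) by auto
      from img_meet[OF inj_cpx this] show "A \<inter> B \<noteq> {} \<longleftrightarrow> cpx ` A \<inter> cpx ` B \<noteq> {}"
        by simp
    qed
  qed
next
  assume H: "is_intersection_graph_of chords V E"
  show "is_intersection_graph_of (hyp_sections 1) V E"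
  proof (rule transfer[OF H])
    fix f assume f: "inj_on f V" "f ` V \<subseteq> chords"
    have ip: "inj_on psi UNIV" by (metis cpx_psi inj_onI)
    show "\<exists>g. inj_on g (f ` V) \<and> g ` (f ` V) \<subseteq> hyp_sections 1 \<and>
             (\<forall>A\<in>f ` V. \<forall>B\<in>f ` V. A \<inter> B \<noteq> {} \<longleftrightarrow> g A \<inter> g B \<noteq> {})"
    proof (intro exI[of _ "image psi"] conjI ballI)
      show "inj_on (image psi) (f ` V)" by (rule img_inj[OF ip]) simp
      show "image psi ` f ` V \<subseteq> hyp_sections 1" using chord_is_sec f(2) by blast
      fix A B assume "A \<in> f ` V" "B \<in> f ` V"
      show "A \<inter> B \<noteq> {} \<longleftrightarrow> psi ` A \<inter> psi ` B \<noteq> {}"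
        using img_meet[OF ip subset_UNIV subset_UNIV] by simp
    qed
  qed
qed


theorem mainTheorem3:
  fixes d :: nat and V :: "'v set" and E :: "'v \<Rightarrow> 'v \<Rightarrow> bool"
  assumes "d \<ge> 1" and "graph V E" and "countable V"
  shows "d_sphere_graph d V E \<longleftrightarrow> in_S d V E"
proof (cases "d = 1")
  case True
  then show ?thesis unfolding d_sphere_graph_def in_S_def using main_1 by simp
next
  case False
  then have "d \<ge> 2" using assms(1) by simp
  then show ?thesis unfolding d_sphere_graph_def in_S_def using main_ge2[OF _ assms(3)] False by simp
qed

end
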